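(* Let $n,m$ be positive integers. Consider the map sending $f\in\mathcal{A}([n];m)$ (a $P$-partition of the $n$-element antichain with $|f(i)|\le m$ for all $i$) to the following sequence of card placements of a lazy $m$-shelf shuffler: for $i=1,2,\ldots,n$ in turn, card $i$ is placed on shelf $|f(i)|$, on top of the cards already on that shelf if $f(i)$ is barred, and below the cards already on that shelf if $f(i)$ is unbarred. This map is a bijection between $\mathcal{A}([n];m)$ and the set of outcomes (sequences of card placements) of the lazy $m$-shelf shuffler, and the resulting order of the deck from top to bottom is $\pi(f)(1),\pi(f)(2),\ldots,\pi(f)(n)$, where $\pi(f)$ is the sorting permutation of $f$.
   Context: Integers are written $\ldots,\bar 2,\bar 1,0,1,2,\ldots$ with $\bar i=-i$, totally ordered by $0<_{\mathbb Z}\bar1<_{\mathbb Z}1<_{\mathbb Z}\bar2<_{\mathbb Z}2<_{\mathbb Z}\cdots$, and $|\bar j|=j$. A $P$-partition of the antichain $[n]$ (no relations) is any function $f:[n]\to\mathbb Z$; $\mathcal{A}([n];m)$ is the set of such $f$ with $|f(i)|\le m$ for all $i$. The sorting permutation $\pi=\pi(f)\in S_n$ is the unique permutation (viewed as the total order $\pi(1)<_\pi\cdots<_\pi\pi(n)$) such that: if $f(i)<_{\mathbb Z}f(j)$ then $i<_\pi j$; if $i<j$ and $f(i)=f(j)\in\{0,1,2,\ldots\}$ then $i<_\pi j$; if $i<j$ and $f(i)=f(j)\in\{\bar1,\bar2,\ldots\}$ then $j<_\pi i$. Lazy $m$-shelf shuffler: a deck with cards labeled $1,\ldots,n$ from top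 to bottom; cards are taken in order $1,2,\ldots,n$; each card is placed either on shelf $0$ (always below the cards already there) or on one of shelves $1,\ldots,m$, either on top of or below the cards already there (so there are $2m+1$ choices per card). At the end the piles are stacked with shelf $0$ on top, then shelf $1$, ..., shelf $m$ at the bottom. An outcome is the sequence of choices made for cards $1,\ldots,n$. *)

theory Defs
  imports "HOL-Library.FuncSet" "HOL-Combinatorics.Permutations"
begin

text \<open>Barred integers are represented by negative ints: bar j = -j.
  The total order 0 < bar 1 < 1 < bar 2 < 2 < ... is given by the key below.\<close>

definition zkey :: "int \<Rightarrow> int" where
  "zkey x = 2 * \<bar>x\<bar> - (if x < 0 then 1 else 0)"

definition zless :: "int \<Rightarrow> int \<Rightarrow> bool" where
  "zless x y \<longleftrightarrow> zkey x < zkey y"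

definition Apart :: "nat \<Rightarrow> nat \<Rightarrow> (nat \<Rightarrow> int) set" where
  "Apart n m = {f \<in> {1..n} \<rightarrow>\<^sub>E UNIV. \<forall>i\<in>{1..n}. \<bar>f i\<bar> \<le> int m}"

text \<open>Sorting permutation: pi permutes {1..n}; the total order is
  pi(1) <_pi ... <_pi pi(n), i.e. i <_pi j iff inv pi i < inv pi j.\<close>
definition is_sorting_perm :: "nat \<Rightarrow> (nat \<Rightarrow> int) \<Rightarrow> (nat \<Rightarrow> nat) \<Rightarrow> bool" where
  "is_sorting_perm n f \<pi> \<longleftrightarrow> \<pi> permutes {1..n} \<and>
     (\<forall>i\<in>{1..n}. \<forall>j\<in>{1..n}.
        (zless (f i) (f j) \<longrightarrow> inv \<pi> i < inv \<pi> j) \<and>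
        (i < j \<and> f i = f j \<and> f i \<ge> 0 \<longrightarrow> inv \<pi> i < inv \<pi> j) \<and>
        (i < j \<and> f i = f j \<and> f i < 0 \<longrightarrow> inv \<pi> j < inv \<pi> i))"

definition sorting_perm :: "nat \<Rightarrow> (nat \<Rightarrow> int) \<Rightarrow> (nat \<Rightarrow> nat)" where
  "sorting_perm n f = (THE \<pi>. is_sorting_perm n f \<pi>)"

text \<open>A single card placement is a pair (shelf, on_top).  Shelf 0 only allows
  placement below, encoded as (0, False); shelves 1..m allow both.\<close>
definition choices :: "nat \<Rightarrow> (nat \<times> bool) set" where
  "choices m = {(0, False)} \<union> {(s, b). 1 \<le> s \<and> s \<le> m}"

definition outcomes :: "nat \<Rightarrow> nat \<Rightarrow> (nat \<Rightarrow> nat \<times> bool) set" where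
  "outcomes n m = {1..n} \<rightarrow>\<^sub>E choices m"

fun deal :: "(nat \<Rightarrow> nat \<times> bool) \<Rightarrow> nat \<Rightarrow> (nat \<Rightarrow> nat list)" where
  "deal c 0 = (\<lambda>_. [])"
| "deal c (Suc k) = (let S = deal c k; s = fst (c (Suc k)) in
     S(s := (if snd (c (Suc k)) then Suc k # S s else S s @ [Suc k])))"

text \<open>Final deck, top to bottom: shelf 0 on top, ..., shelf m at bottom.\<close>
definition deck :: "nat \<Rightarrow> nat \<Rightarrow> (nat \<Rightarrow> nat \<times> bool) \<Rightarrow> nat list" where
  "deck n m c = concat (map (deal c n) [0..<Suc m])"

definition to_outcome :: "nat \<Rightarrow> (nat \<Rightarrow> int) \<Rightarrow> (nat \<Rightarrow> nat \<times> bool)" where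
  "to_outcome n f = (\<lambda>i\<in>{1..n}. (nat \<bar>f i\<bar>, f i < 0))"

end

theory Submission
  imports Defs
begin

definition bef :: "(nat \<Rightarrow> int) \<Rightarrow> nat \<Rightarrow> nat \<Rightarrow> bool" where
  "bef f i j \<longleftrightarrow> zless (f i) (f j) \<or> (f i = f j \<and> ((f i \<ge> 0 \<and> i < j) \<or> (f i < 0 \<and> j < i)))"

lemma zkey_inj: "zkey x = zkey y \<Longrightarrow> x = y"
  unfolding zkey_def by (auto split: if_splits simp: abs_if; presburger)

lemma bef_irrefl: "\<not> bef f i i"
  unfolding bef_def zless_def by auto

lemma bef_asym: "bef f i j \<Longrightarrow> \<not> bef f j i"
  unfolding bef_def zless_def by auto

lemma bef_total:
  assumes "i \<noteq> j" shows "bef f i j \<or> bef f j i"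
proof (cases "zkey (f i) = zkey (f j)")
  case True
  then have e: "f i = f j" by (rule zkey_inj)
  have "i < j \<or> j < i" using assms by linarith
  then show ?thesis unfolding bef_def using e by (cases "f i < 0") auto
next
  case False
  then have "zkey (f i) < zkey (f j) \<or> zkey (f j) < zkey (f i)" by linarith
  then show ?thesis unfolding bef_def zless_def by blast
qed

lemma sorted_bef_unique:
  "sorted_wrt (bef f) xs \<Longrightarrow> sorted_wrt (bef f) ys \<Longrightarrow> set xs = set ys \<Longrightarrow> xs = ys"
proof (induction xs arbitrary: ys)
  case Nil
  then show ?case by simp
next
  case (Cons x xs)
  then obtain y ys' where ys: "ys = y # ys'" by (cases ys) auto
  show ?case
  proof (cases "x = y")
    case True
    have "x \<notin> set xs" using Cons.prems(1) bef_irrefl by auto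
    moreover have "x \<notin> set ys'" using Cons.prems(2) bef_irrefl ys True by auto
    ultimately have "set xs = set ys'" using Cons.prems(3) ys True by auto
    then show ?thesis using Cons ys True by auto
  next
    case False
    have "y \<in> set xs" using Cons.prems(3) ys False by auto
    then have "bef f x y" using Cons.prems(1) by auto
    moreover have "x \<in> set ys'" using Cons.prems(3) ys False by auto
    then have "bef f y x" using Cons.prems(2) ys by auto
    ultimately show ?thesis using bef_asym by blast
  qed
qed

lemma sorting_perm_sorted:
  assumes "is_sorting_perm n f \<sigma>"
  shows "sorted_wrt (bef f) (map \<sigma> [1..<Suc n])" "set (map \<sigma> [1..<Suc n]) = {1..n}"
proof -
  have p: "\<sigma> permutes {1..n}" using assms unfolding is_sorting_perm_def by auto
  show "set (map \<sigma> [1..<Suc n]) = {1..n}"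
    using permutes_image[OF p] by (simp only: set_map set_upt atLeastLessThanSuc_atLeastAtMost)
  show "sorted_wrt (bef f) (map \<sigma> [1..<Suc n])"
    unfolding sorted_wrt_iff_nth_less
  proof (intro allI impI)
    fix p q assume pq: "p < q" "q < length (map \<sigma> [1..<Suc n])"
    then have pq': "p < q" "q < n" by (auto simp del: upt_Suc)
    define a where "a = \<sigma> (p+1)"
    define b where "b = \<sigma> (q+1)"
    have ia: "inv \<sigma> a = p+1" unfolding a_def using permutes_inverses(2)[OF p] by simp
    have ib: "inv \<sigma> b = q+1" unfolding b_def using permutes_inverses(2)[OF p] by simp
    have ab: "a \<in> {1..n}" "b \<in> {1..n}" unfolding a_def b_def
      using pq' permutes_in_image[OF p] by auto
    have "a \<noteq> b" using ia ib pq' by auto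
    have "bef f a b"
    proof (rule ccontr)
      assume "\<not> bef f a b"
      then have "bef f b a" using bef_total \<open>a \<noteq> b\<close> by blast
      then have "inv \<sigma> b < inv \<sigma> a"
        using assms ab unfolding is_sorting_perm_def bef_def by (auto 4 3)
      then show False using ia ib pq' by simp
    qed
    moreover have "map \<sigma> [1..<Suc n] ! p = a" "map \<sigma> [1..<Suc n] ! q = b"
      using pq' unfolding a_def b_def by (auto simp: nth_map nth_upt simp del: upt_Suc)
    ultimately show "bef f (map \<sigma> [1..<Suc n] ! p) (map \<sigma> [1..<Suc n] ! q)" by simp
  qed
qed

lemma sorted_to_perm:
  assumes p: "\<pi> permutes {1..n}" and s: "sorted_wrt (bef f) (map \<pi> [1..<Suc n])"
  shows "is_sorting_perm n f \<pi>"
proof -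
  have key: "inv \<pi> a < inv \<pi> b" if ab: "a \<in> {1..n}" "b \<in> {1..n}" "bef f a b" for a b
  proof -
    define x where "x = inv \<pi> a"
    define y where "y = inv \<pi> b"
    have xy: "x \<in> {1..n}" "y \<in> {1..n}" unfolding x_def y_def
      using ab permutes_in_image[OF permutes_inv[OF p]] by auto
    have px: "\<pi> x = a" "\<pi> y = b" unfolding x_def y_def using permutes_inverses(1)[OF p] by auto
    show ?thesis
    proof (rule ccontr)
      assume "\<not> inv \<pi> a < inv \<pi> b"
      then have "y \<le> x" unfolding x_def y_def by simp
      moreover have "x \<noteq> y" using px ab(3) bef_irrefl by auto
      ultimately have "y - 1 < x - 1" "x - 1 < length (map \<pi> [1..<Suc n])" using xy by auto
      then have "bef f (map \<pi> [1..<Suc n] ! (y-1)) (map \<pi> [1..<Suc n] ! (x-1))"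
        using s unfolding sorted_wrt_iff_nth_less by blast
      moreover have "map \<pi> [1..<Suc n] ! (y-1) = b" "map \<pi> [1..<Suc n] ! (x-1) = a"
        using xy px by (auto simp: nth_map nth_upt simp del: upt_Suc)
      ultimately show False using ab(3) bef_asym by auto
    qed
  qed
  show ?thesis unfolding is_sorting_perm_def
  proof (intro conjI p ballI)
    fix i j assume ij: "i \<in> {1..n}" "j \<in> {1..n}"
    show "zless (f i) (f j) \<longrightarrow> inv \<pi> i < inv \<pi> j" using key[OF ij] unfolding bef_def by auto
    show "i < j \<and> f i = f j \<and> 0 \<le> f i \<longrightarrow> inv \<pi> i < inv \<pi> j" using key[OF ij] unfolding bef_def by auto
    show "i < j \<and> f i = f j \<and> f i < 0 \<longrightarrow> inv \<pi> j < inv \<pi> i" using key[OF ij(2,1)] unfolding bef_def by auto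
  qed
qed

lemma sorted_wrt_concat_blocks:
  "(\<forall>xs\<in>set xss. sorted_wrt R xs) \<Longrightarrow> sorted_wrt (\<lambda>xs ys. \<forall>x\<in>set xs. \<forall>y\<in>set ys. R x y) xss
   \<Longrightarrow> sorted_wrt R (concat xss)"
  by (induction xss) (auto simp: sorted_wrt_append)

lemma sorted_irrefl_distinct: "sorted_wrt R xs \<Longrightarrow> (\<forall>x. \<not> R x x) \<Longrightarrow> distinct xs"
  by (induction xs) auto

lemma sorting_perm_eq:
  assumes L: "sorted_wrt (bef f) L" "set L = {1..n}"
  shows "map (sorting_perm n f) [1..<Suc n] = L"
proof -
  have d: "distinct L" using sorted_irrefl_distinct[OF L(1)] bef_irrefl by blast
  have len: "length L = n" using distinct_card[OF d] L(2) by simp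
  define \<pi> where "\<pi> x = (if x \<in> {1..n} then L ! (x - 1) else x)" for x
  have m: "map \<pi> [1..<Suc n] = L"
    by (rule nth_equalityI) (auto simp: len \<pi>_def nth_upt simp del: upt_Suc)
  have "inj_on \<pi> (set [1..<Suc n])" using d m by (metis distinct_map)
  moreover have "\<pi> ` {1..n} = {1..n}" using m L(2)
    by (metis list.set_map set_upt atLeastLessThanSuc_atLeastAtMost)
  ultimately have "bij_betw \<pi> {1..n} {1..n}" unfolding bij_betw_def
    by (simp only: set_upt atLeastLessThanSuc_atLeastAtMost)
  then have p: "\<pi> permutes {1..n}"
    by (rule bij_imp_permutes) (auto simp: \<pi>_def)
  have sp: "is_sorting_perm n f \<pi>" using sorted_to_perm[OF p] m L(1) by simp
  have "sorting_perm n f = \<pi>" unfolding sorting_perm_def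
  proof (rule the_equality[where P="is_sorting_perm n f", OF sp])
    fix \<sigma> assume s: "is_sorting_perm n f \<sigma>"
    have "map \<sigma> [1..<Suc n] = L"
      using sorted_bef_unique[OF sorting_perm_sorted(1)[OF s] L(1)] sorting_perm_sorted(2)[OF s] L(2)
      by simp
    then have eq: "map \<sigma> [1..<Suc n] = map \<pi> [1..<Suc n]" using m by simp
    have ps: "\<sigma> permutes {1..n}" using s unfolding is_sorting_perm_def by auto
    show "\<sigma> = \<pi>"
    proof
      fix x show "\<sigma> x = \<pi> x"
      proof (cases "x \<in> {1..n}")
        case True
        then show ?thesis using eq by (simp add: map_eq_conv atLeastLessThanSuc_atLeastAtMost del: upt_Suc)
      next
        case False
        then show ?thesis using permutes_not_in[OF ps False] permutes_not_in[OF p False] by simp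
      qed
    qed
  qed
  then show ?thesis using m by simp
qed

lemma deal_formula:
  assumes "k \<le> n"
  shows "deal (to_outcome n f) k s =
    rev [i\<leftarrow>[1..<Suc k]. f i = - int s \<and> f i < 0] @ [i\<leftarrow>[1..<Suc k]. f i = int s \<and> f i \<ge> 0]"
  using assms
proof (induction k arbitrary: s)
  case 0
  then show ?case by simp
next
  case (Suc k)
  have c: "to_outcome n f (Suc k) = (nat \<bar>f (Suc k)\<bar>, f (Suc k) < 0)"
    using Suc.prems unfolding to_outcome_def by simp
  show ?case using Suc.IH[of s] Suc.prems
    by (auto simp: c Let_def)
qed

lemma sorted_filter_gen:
  "sorted_wrt (<) xs \<Longrightarrow> (\<And>x y. Q x \<Longrightarrow> Q y \<Longrightarrow> x < y \<Longrightarrow> P x y) \<Longrightarrow> sorted_wrt P (filter Q (xs::nat list))"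
  by (induction xs) auto

definition blk :: "nat \<Rightarrow> (nat \<Rightarrow> int) \<Rightarrow> nat \<Rightarrow> nat list" where
  "blk n f s = rev [i\<leftarrow>[1..<Suc n]. f i = - int s \<and> f i < 0] @ [i\<leftarrow>[1..<Suc n]. f i = int s \<and> f i \<ge> 0]"

lemma blk_set: "x \<in> set (blk n f s) \<Longrightarrow> \<bar>f x\<bar> = int s \<and> x \<in> {1..n}"
  unfolding blk_def by auto

lemma blk_sorted: "sorted_wrt (bef f) (blk n f s)"
  unfolding blk_def sorted_wrt_append
proof (intro conjI)
  show "sorted_wrt (bef f) (rev [i\<leftarrow>[1..<Suc n]. f i = - int s \<and> f i < 0])"
    unfolding sorted_wrt_rev
    by (rule sorted_filter_gen[OF sorted_wrt_upt]) (auto simp: bef_def)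
  show "sorted_wrt (bef f) [i\<leftarrow>[1..<Suc n]. f i = int s \<and> f i \<ge> 0]"
    by (rule sorted_filter_gen[OF sorted_wrt_upt]) (auto simp: bef_def)
  show "\<forall>x\<in>set (rev [i\<leftarrow>[1..<Suc n]. f i = - int s \<and> f i < 0]).
          \<forall>y\<in>set [i\<leftarrow>[1..<Suc n]. f i = int s \<and> f i \<ge> 0]. bef f x y"
    by (auto simp: bef_def zless_def zkey_def)
qed

lemma deck_props:
  assumes f: "f \<in> Apart n m"
  shows "sorted_wrt (bef f) (deck n m (to_outcome n f))" "set (deck n m (to_outcome n f)) = {1..n}"
proof -
  have d: "deck n m (to_outcome n f) = concat (map (blk n f) [0..<Suc m])"
  proof -
    have "deal (to_outcome n f) n = blk n f"
      by (rule ext) (simp only: blk_def deal_formula[OF order_refl])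
    then show ?thesis unfolding deck_def by simp
  qed
  have fb: "\<And>i. i \<in> {1..n} \<Longrightarrow> \<bar>f i\<bar> \<le> int m" using f unfolding Apart_def by auto
  show "sorted_wrt (bef f) (deck n m (to_outcome n f))"
    unfolding d
  proof (rule sorted_wrt_concat_blocks)
    show "\<forall>xs\<in>set (map (blk n f) [0..<Suc m]). sorted_wrt (bef f) xs"
      using blk_sorted by auto
    show "sorted_wrt (\<lambda>xs ys. \<forall>x\<in>set xs. \<forall>y\<in>set ys. bef f x y) (map (blk n f) [0..<Suc m])"
      unfolding sorted_wrt_map
    proof (rule sorted_wrt_mono_rel[OF _ sorted_wrt_upt])
      fix s t assume "s \<in> set [0..<Suc m]" "t \<in> set [0..<Suc m]" "s < t"
      then have st: "s < t" by simp
      show "\<forall>x\<in>set (blk n f s). \<forall>y\<in>set (blk n f t). bef f x y"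
      proof (intro ballI)
        fix x y assume "x \<in> set (blk n f s)" "y \<in> set (blk n f t)"
        then have "\<bar>f x\<bar> = int s" "\<bar>f y\<bar> = int t" using blk_set by auto
        then have "zkey (f x) < zkey (f y)" using st unfolding zkey_def by auto
        then show "bef f x y" unfolding bef_def zless_def by auto
      qed
    qed
  qed
  show "set (deck n m (to_outcome n f)) = {1..n}"
  proof
    show "set (deck n m (to_outcome n f)) \<subseteq> {1..n}" unfolding d using blk_set by auto
    show "{1..n} \<subseteq> set (deck n m (to_outcome n f))"
    proof
      fix i assume i: "i \<in> {1..n}"
      define s where "s = nat \<bar>f i\<bar>"
      have sm: "s < Suc m" using fb[OF i] unfolding s_def by auto
      have "i \<in> set (blk n f s)" using i unfolding blk_def s_def by (auto simp del: upt_Suc)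
      then show "i \<in> set (deck n m (to_outcome n f))" unfolding d using sm by (auto simp del: upt_Suc)
    qed
  qed
qed

theorem proposition2p5:
  fixes n m :: nat
  assumes "n > 0" and "m > 0"
  shows "bij_betw (to_outcome n) (Apart n m) (outcomes n m) \<and>
         (\<forall>f\<in>Apart n m. deck n m (to_outcome n f) = map (sorting_perm n f) [1..<Suc n])"
proof
  show "\<forall>f\<in>Apart n m. deck n m (to_outcome n f) = map (sorting_perm n f) [1..<Suc n]"
    using sorting_perm_eq deck_props by metis
  show "bij_betw (to_outcome n) (Apart n m) (outcomes n m)"
    unfolding bij_betw_def
  proof (intro conjI)
    show "inj_on (to_outcome n) (Apart n m)"
    proof (rule inj_onI)
      fix f g assume fg: "f \<in> Apart n m" "g \<in> Apart n m" "to_outcome n f = to_outcome n g"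
      show "f = g"
      proof
        fix i show "f i = g i"
        proof (cases "i \<in> {1..n}")
          case True
          then have "nat \<bar>f i\<bar> = nat \<bar>g i\<bar>" "(f i < 0) = (g i < 0)"
            using fun_cong[OF fg(3), of i] unfolding to_outcome_def by auto
          then show ?thesis by (auto simp: abs_if split: if_splits)
        next
          case False
          then show ?thesis using fg(1,2) unfolding Apart_def PiE_def extensional_def by auto
        qed
      qed
    qed
    show "to_outcome n ` Apart n m = outcomes n m"
    proof
      show "to_outcome n ` Apart n m \<subseteq> outcomes n m"
        unfolding outcomes_def Apart_def to_outcome_def choices_def
        by (auto simp: PiE_def Pi_def nat_le_iff)
      show "outcomes n m \<subseteq> to_outcome n ` Apart n m"
      proof
        fix c assume c: "c \<in> outcomes n m"
        define g where "g = (\<lambda>i\<in>{1..n}. if snd (c i) then - int (fst (c i)) else int (fst (c i)))"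
        have ci: "\<And>i. i \<in> {1..n} \<Longrightarrow> c i \<in> choices m" using c unfolding outcomes_def by auto
        have cx: "\<And>i. i \<notin> {1..n} \<Longrightarrow> c i = undefined" using c unfolding outcomes_def PiE_def extensional_def by auto
        have "fst (c i) \<le> m" if "i \<in> {1..n}" for i using ci[OF that] by (auto simp: choices_def)
        then have "g \<in> Apart n m" unfolding Apart_def g_def
          using ci by (auto simp: choices_def)
        moreover have "to_outcome n g = c"
        proof
          fix i show "to_outcome n g i = c i"
          proof (cases "i \<in> {1..n}")
            case True
            then show ?thesis using ci[OF True] unfolding to_outcome_def g_def choices_def
              by (cases "c i") auto
          next
            case False
            then show ?thesis using cx[OF False] unfolding to_outcome_def by auto
          qed
        qed
        ultimately show "c \<in> to_outcome n ` Apart n m" by force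
      qed
    qed
  qed
qed

end
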